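(* Let $N\ge 2$, $d\ge 1$, and consider the system $$\dot x_i(t)=\frac{1}{N}\sum_{j=1}^N M_{ij}(t)\,(x_j(t)-x_i(t)),\qquad i=1,\dots,N,$$ with $x_i(t)\in\mathbb{R}^d$, where all weights $M_{ij}:[0,+\infty)\to[0,1]$ are Lebesgue measurable, and let $x(t)=(x_1(t),\dots,x_N(t))$ be a solution (in the Carathéodory sense). Fix $T,\mu>0$ and let $G(t)$ be the $(T,\mu)$-connectivity graph associated to the $M_{ij}$. Assume that there exists a constant directed graph $G^*$ on the nodes $\{1,\dots,N\}$ such that all arrows of $G^*$ are arrows of $G(kT)$ for every $k\in\mathbb{N}$, that $G^*$ admits a globally reachable node $I$, and let $d^*:=d(G^*,I)$ be its length to $I$. Set $\tau=d^*T$ and $$C=1-\frac12\left(\frac{\mu T}{N+\mu T}\right)^{d^*}\exp(-2d^*T).$$ Then for all $n\in\mathbb{N}$, $$\max_{i,j}|x_i(n\tau)-x_j(n\tau)|\le C^n\max_{i,j}|x_i(0)-x_j(0)|.$$ Moreover, for all $t\in[0,\tau]$ and $n\in\mathbb{N}$, $$\max_{i,j}|x_i(n\tau+t)-x_j(n\tau+t)|\le \varphi(t)\,C^n\max_{i,j}|x_i(0)-x_j(0)|,$$ where $\delta:=-\frac{N}{2(N-1)}\log(C)$ and $$\varphi(t)=\begin{cases}1 & t\in[0,\tau-\delta],\\ C\exp\!\left(2\frac{N-1}{N}(\tau-t)\right) & t\in[\tau-\delta,\tau].\end{cases}$$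
   Context: $|\cdot|$ is the Euclidean norm. Given $T,\mu>0$ and functions $M_{ij}:[0,+\infty)\to[0,1]$, the $(T,\mu)$-connectivity graph at time $t\ge 0$ is the directed graph $G(t)$ with node set $\{1,\dots,N\}$ in which the arrow $i\to j$ exists iff $\frac1T\int_t^{t+T}M_{ij}(s)\,ds\ge\mu$. A node $I$ of a directed graph $G$ is globally reachable if from every node there is a directed path to $I$. For such $I$, $d(i,I)$ is the minimal number of arrows of a directed path $i\to j_1\to\dots\to j_n=I$ in $G$, and the length of $G$ to $I$ is $d(G,I):=\max_{i} d(i,I)$. $\mathbb{N}$ includes $0$. *)

theory Defs
  imports "HOL-Analysis.Analysis"
begin

definition conn_arrow :: "real \<Rightarrow> real \<Rightarrow> (nat \<Rightarrow> nat \<Rightarrow> real \<Rightarrow> real) \<Rightarrow> real \<Rightarrow> nat \<Rightarrow> nat \<Rightarrow> bool" where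
  "conn_arrow T \<mu> M t i j \<longleftrightarrow> (1 / T) * integral {t..t+T} (M i j) \<ge> \<mu>"

definition globally_reachable :: "nat \<Rightarrow> (nat \<times> nat) set \<Rightarrow> nat \<Rightarrow> bool" where
  "globally_reachable N E I \<longleftrightarrow> I \<in> {1..N} \<and> (\<forall>i\<in>{1..N}. (i, I) \<in> E\<^sup>*)"

definition path_dist :: "(nat \<times> nat) set \<Rightarrow> nat \<Rightarrow> nat \<Rightarrow> nat" where
  "path_dist E i I = (LEAST n. (i, I) \<in> E ^^ n)"

definition graph_length :: "nat \<Rightarrow> (nat \<times> nat) set \<Rightarrow> nat \<Rightarrow> nat" where
  "graph_length N E I = Max ((\<lambda>i. path_dist E i I) ` {1..N})"

definition diameter :: "nat \<Rightarrow> (nat \<Rightarrow> real \<Rightarrow> 'a::real_normed_vector) \<Rightarrow> real \<Rightarrow> real" where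
  "diameter N x t = Max {norm (x i t - x j t) | i j. i \<in> {1..N} \<and> j \<in> {1..N}}"

end

theory Submission
  imports Defs
begin

lemma first_exit:
  fixes w :: "real \<Rightarrow> real"
  assumes ab: "a \<le> b" and cw: "continuous_on {a..b} w" and wa: "w a \<ge> 0" and wb: "w b < 0"
  shows "\<exists>r. a \<le> r \<and> r \<le> b \<and> w r = 0 \<and> (\<forall>u. r \<le> u \<and> u \<le> b \<longrightarrow> w u \<le> 0)"
proof -
  let ?S = "{a..b} \<inter> w -` {0..}"
  have cl: "closed ?S" by (rule continuous_closed_preimage[OF cw]) auto
  have ne: "?S \<noteq> {}" using ab wa by auto
  have bdd: "bdd_above ?S" by (rule bdd_aboveI[of _ b]) auto
  define r where "r = Sup ?S"
  have rS: "r \<in> ?S" unfolding r_def by (rule closed_contains_Sup[OF ne bdd cl])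
  have lt: "w u < 0" if "r < u" "u \<le> b" for u
  proof (rule ccontr)
    assume "\<not> w u < 0"
    then have "u \<in> ?S" using that rS by auto
    then have "u \<le> r" unfolding r_def by (rule cSup_upper[OF _ bdd])
    then show False using that by simp
  qed
  have rb: "r \<le> b" using rS by auto
  have wr: "w r \<ge> 0" using rS by auto
  obtain c where c: "r \<le> c" "c \<le> b" "w c = 0"
    using IVT2'[of w b 0 r] wb wr rb continuous_on_subset[OF cw] rS by force
  have "c = r" using lt[of c] c by force
  then have "w r = 0" using c by simp
  moreover have "\<forall>u. r \<le> u \<and> u \<le> b \<longrightarrow> w u \<le> 0"
    using lt \<open>w r = 0\<close> by (metis less_eq_real_def order_less_imp_le)
  ultimately show ?thesis using rS rb by auto
qed

lemma gronwall_zero: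
  fixes w :: "real \<Rightarrow> real"
  assumes ab: "a \<le> b" and c: "c \<ge> 0" and cw: "continuous_on {a..b} w" and wa: "w a \<ge> 0"
    and ineq: "\<And>r t. a \<le> r \<Longrightarrow> r \<le> t \<Longrightarrow> t \<le> b \<Longrightarrow> w t - w r \<ge> - c * integral {r..t} w"
  shows "w b \<ge> 0"
proof (rule ccontr)
  assume "\<not> w b \<ge> 0"
  then have wb: "w b < 0" by simp
  obtain r where r: "a \<le> r" "r \<le> b" "w r = 0" "\<forall>u. r \<le> u \<and> u \<le> b \<longrightarrow> w u \<le> 0"
    using first_exit[OF ab cw wa wb] by blast
  have "integral {r..b} w \<le> integral {r..b} (\<lambda>_. 0::real)"
    apply (rule integral_le)
      apply (rule integrable_continuous_interval)
      apply (rule continuous_on_subset[OF cw]) using r by auto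
  then have "integral {r..b} w \<le> 0" by simp
  then have "- c * integral {r..b} w \<ge> 0" using c by (simp add: mult_nonneg_nonpos)
  with ineq[OF r(1) r(2) order_refl] r(3) wb show False by simp
qed

lemma exp_integral:
  fixes c K a r t :: real
  assumes c: "c > 0" and rt: "r \<le> t"
  shows "integral {r..t} (\<lambda>u. K * exp (-c*(u-a))) = - (1/c) * (K * exp (-c*(t-a)) - K * exp (-c*(r-a)))"
proof -
  have "((\<lambda>u. K * exp (-c*(u-a))) has_integral
      ((- (K/c) * exp (-c*(t-a))) - (- (K/c) * exp (-c*(r-a))))) {r..t}"
  proof (rule fundamental_theorem_of_calculus[OF rt])
    fix x assume "x \<in> {r..t}"
    show "((\<lambda>u. - (K/c) * exp (-c*(u-a))) has_vector_derivative K * exp (-c*(x-a))) (at x within {r..t})"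
      unfolding has_real_derivative_iff_has_vector_derivative[symmetric]
      using c by (auto intro!: derivative_eq_intros simp: field_simps)
  qed
  then have "integral {r..t} (\<lambda>u. K * exp (-c*(u-a))) = (- (K/c) * exp (-c*(t-a))) - (- (K/c) * exp (-c*(r-a)))"
    by (rule integral_unique)
  then show ?thesis using c by (simp add: field_simps)
qed

lemma exp_compare:
  fixes y :: "real \<Rightarrow> real"
  assumes ab: "a \<le> b" and c: "c > 0" and cy: "continuous_on {a..b} y"
    and ineq: "\<And>r t. a \<le> r \<Longrightarrow> r \<le> t \<Longrightarrow> t \<le> b \<Longrightarrow> y t - y r \<ge> - c * integral {r..t} y"
  shows "y b \<ge> exp (-c*(b-a)) * y a"
proof -
  define \<phi> where "\<phi> = (\<lambda>u. y a * exp (-c*(u-a)))"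
  define w where "w = (\<lambda>u. y u - \<phi> u)"
  have cphi: "continuous_on {a..b} \<phi>" unfolding \<phi>_def by (intro continuous_intros)
  have cw: "continuous_on {a..b} w" unfolding w_def by (intro continuous_intros cy cphi)
  have "w b \<ge> 0"
  proof (rule gronwall_zero[OF ab _ cw])
    show "0 \<le> c" using c by simp
    show "w a \<ge> 0" by (simp add: w_def \<phi>_def)
    fix r t assume rt: "a \<le> r" "r \<le> t" "t \<le> b"
    have iy: "y integrable_on {r..t}"
      by (rule integrable_continuous_interval, rule continuous_on_subset[OF cy]) (use rt in auto)
    have ip: "\<phi> integrable_on {r..t}"
      by (rule integrable_continuous_interval, rule continuous_on_subset[OF cphi]) (use rt in auto)
    have ei: "integral {r..t} \<phi> = - (1/c) * (\<phi> t - \<phi> r)"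
      unfolding \<phi>_def by (rule exp_integral[OF c rt(2)])
    have iw: "integral {r..t} w = integral {r..t} y - integral {r..t} \<phi>"
      unfolding w_def by (rule integral_diff[OF iy ip])
    have "\<phi> t - \<phi> r = - c * integral {r..t} \<phi>" using ei c by simp
    moreover have "- c * integral {r..t} w = - c * integral {r..t} y + c * integral {r..t} \<phi>"
      using iw by (simp add: right_diff_distrib)
    ultimately show "w t - w r \<ge> - c * integral {r..t} w"
      using ineq[OF rt] unfolding w_def by linarith
  qed
  then show ?thesis by (simp add: w_def \<phi>_def mult.commute)
qed

definition FF :: "nat \<Rightarrow> (nat \<Rightarrow> nat \<Rightarrow> real \<Rightarrow> real) \<Rightarrow> (nat \<Rightarrow> real \<Rightarrow> real) \<Rightarrow> nat \<Rightarrow> real \<Rightarrow> real" where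
  "FF N M y i u = (1 / real N) * (\<Sum>j=1..N. M i j u * (y j u - y i u))"

definition rngM :: "nat \<Rightarrow> (nat \<Rightarrow> nat \<Rightarrow> real \<Rightarrow> real) \<Rightarrow> bool" where
  "rngM N M \<longleftrightarrow> (\<forall>i\<in>{1..N}. \<forall>j\<in>{1..N}. \<forall>t\<ge>0. 0 \<le> M i j t \<and> M i j t \<le> 1)"

definition sysR :: "nat \<Rightarrow> (nat \<Rightarrow> nat \<Rightarrow> real \<Rightarrow> real) \<Rightarrow> (nat \<Rightarrow> real \<Rightarrow> real) \<Rightarrow> bool" where
  "sysR N M y \<longleftrightarrow> (\<forall>i\<in>{1..N}. \<forall>b. continuous_on {0..b} (y i)) \<and>
     (\<forall>i\<in>{1..N}. \<forall>s t. 0 \<le> s \<longrightarrow> s \<le> t \<longrightarrow> (FF N M y i has_integral (y i t - y i s)) {s..t})"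

lemma FF_affine: "FF N M (\<lambda>k u. c + e * y k u) i u = e * FF N M y i u"
  unfolding FF_def by (simp add: sum_distrib_left algebra_simps)

lemma P1:
  assumes rng: "rngM N M" and u: "u \<ge> 0" and i: "i \<in> {1..N}" and yi: "y i u \<le> 0"
    and yk: "\<forall>k\<in>{1..N}. y k u \<ge> -B" and B: "B \<ge> 0"
  shows "FF N M y i u \<ge> -B"
proof (cases "N = 0")
  case True then show ?thesis using i by simp
next
  case False
  have "M i k u * (y k u - y i u) \<ge> -B" if k: "k \<in> {1..N}" for k
  proof (cases "y k u - y i u \<ge> 0")
    case True
    then show ?thesis using rng i k u B unfolding rngM_def by (meson mult_nonneg_nonneg neg_le_0_iff_le order_trans)
  next
    case False
    have m: "0 \<le> M i k u" "M i k u \<le> 1" using rng i k u unfolding rngM_def by auto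
    have "M i k u * (y k u - y i u) \<ge> 1 * (y k u - y i u)"
      using False m by (intro mult_right_mono_neg) auto
    moreover have "y k u \<ge> -B" using yk k by auto
    then have "y k u - y i u \<ge> -B" using yi by linarith
    ultimately show ?thesis by simp
  qed
  then have "(\<Sum>k=1..N. M i k u * (y k u - y i u)) \<ge> (\<Sum>k=1..N. -B)"
    by (intro sum_mono) auto
  then have "(\<Sum>k=1..N. M i k u * (y k u - y i u)) \<ge> - (real N * B)" by simp
  then have "(1/real N) * (\<Sum>k=1..N. M i k u * (y k u - y i u)) \<ge> (1/real N) * (- (real N * B))"
    using False by (intro mult_left_mono) auto
  then show ?thesis using False unfolding FF_def by simp
qed

lemma P3:
  assumes rng: "rngM N M" and u: "u \<ge> 0" and i: "i \<in> {1..N}" and j: "j \<in> {1..N}"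
    and yk: "\<forall>k\<in>{1..N}. y k u \<ge> 0"
  shows "FF N M y i u \<ge> (1/real N) * M i j u * y j u - y i u"
proof -
  have N: "N \<ge> 1" using i by simp
  have m: "\<And>k. k \<in> {1..N} \<Longrightarrow> 0 \<le> M i k u \<and> M i k u \<le> 1" using rng i u unfolding rngM_def by auto
  have s1: "(\<Sum>k=1..N. M i k u * y k u) \<ge> M i j u * y j u"
    by (rule member_le_sum[OF j]) (use m yk in auto)
  have s2: "(\<Sum>k=1..N. M i k u) \<le> real N"
    using sum_bounded_above[of "{1..N}" "\<lambda>k. M i k u" 1] m by auto
  have s2': "(1/real N) * (\<Sum>k=1..N. M i k u) * y i u \<le> 1 * y i u"
    using s2 N yk i by (intro mult_right_mono) (auto simp: field_simps)
  have e: "FF N M y i u = (1/real N) * (\<Sum>k=1..N. M i k u * y k u) - (1/real N) * (\<Sum>k=1..N. M i k u) * y i u"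
  proof -
    have "(\<Sum>k=1..N. M i k u * (y k u - y i u)) = (\<Sum>k=1..N. M i k u * y k u) - (\<Sum>k=1..N. M i k u) * y i u"
      by (simp add: right_diff_distrib sum_subtractf sum_distrib_right)
    then show ?thesis unfolding FF_def by (simp add: right_diff_distrib)
  qed
  have "(1/real N) * (\<Sum>k=1..N. M i k u * y k u) \<ge> (1/real N) * (M i j u * y j u)"
    using s1 by (intro mult_left_mono) auto
  then show ?thesis using e s2' by simp
qed

lemma P2:
  assumes rng: "rngM N M" and u: "u \<ge> 0" and i: "i \<in> {1..N}"
    and yk: "\<forall>k\<in>{1..N}. y k u \<ge> 0"
  shows "FF N M y i u \<ge> - y i u"
proof -
  have "0 \<le> (1/real N) * M i i u * y i u" using rng u i yk unfolding rngM_def by auto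
  then show ?thesis using P3[of N M u i i y, OF rng u i i yk] by linarith
qed

lemma P4:
  assumes rng: "rngM N M" and u: "u \<ge> 0" and i: "i \<in> {1..N}"
    and yk: "\<forall>k\<in>{1..N}. y k u - y i u \<ge> -S" and S: "S \<ge> 0"
  shows "FF N M y i u \<ge> - ((real N - 1) / real N) * S"
proof -
  have N: "N \<ge> 1" using i by simp
  have t: "M i k u * (y k u - y i u) \<ge> -S" if k: "k \<in> {1..N}" for k
  proof (cases "y k u - y i u \<ge> 0")
    case True
    then show ?thesis using rng i k u S unfolding rngM_def by (meson mult_nonneg_nonneg neg_le_0_iff_le order_trans)
  next
    case False
    have m: "0 \<le> M i k u" "M i k u \<le> 1" using rng i k u unfolding rngM_def by auto
    have "M i k u * (y k u - y i u) \<ge> 1 * (y k u - y i u)"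
      using False m by (intro mult_right_mono_neg) auto
    moreover have "y k u - y i u \<ge> -S" using yk k by auto
    ultimately show ?thesis by simp
  qed
  have "(\<Sum>k=1..N. M i k u * (y k u - y i u)) = M i i u * (y i u - y i u) + (\<Sum>k\<in>{1..N}-{i}. M i k u * (y k u - y i u))"
    using i by (simp add: sum.remove)
  also have "\<dots> = (\<Sum>k\<in>{1..N}-{i}. M i k u * (y k u - y i u))" by simp
  also have "\<dots> \<ge> (\<Sum>k\<in>{1..N}-{i}. -S)" by (rule sum_mono) (use t in auto)
  also have "(\<Sum>k\<in>{1..N}-{i}. -S) = - (real N - 1) * S" using i N by (simp add: of_nat_diff algebra_simps)
  finally have "(\<Sum>k=1..N. M i k u * (y k u - y i u)) \<ge> - (real N - 1) * S" .
  then have "(1/real N) * (\<Sum>k=1..N. M i k u * (y k u - y i u)) \<ge> (1/real N) * (- (real N - 1) * S)"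
    by (intro mult_left_mono) auto
  moreover have "(1/real N) * (- (real N - 1) * S) = - ((real N - 1) / real N) * S" by (simp add: divide_simps) (simp add: algebra_simps)
  ultimately show ?thesis unfolding FF_def by linarith
qed

lemma sysR_affine:
  assumes "sysR N M y"
  shows "sysR N M (\<lambda>k u. c + e * y k u)"
proof -
  have c: "\<forall>i\<in>{1..N}. \<forall>b. continuous_on {0..b} (\<lambda>u. c + e * y i u)"
    using assms unfolding sysR_def by (auto intro!: continuous_intros)
  have "((\<lambda>u. e * FF N M y i u) has_integral (e * (y i t - y i s))) {s..t}"
    if "i \<in> {1..N}" "0 \<le> s" "s \<le> t" for i s t
    using assms that unfolding sysR_def by (intro has_integral_mult_right) auto
  then show ?thesis using c unfolding sysR_def FF_affine by (simp add: algebra_simps)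
qed

lemma sys_int:
  assumes "sysR N M y" "i \<in> {1..N}" "0 \<le> s" "s \<le> t"
  shows "FF N M y i integrable_on {s..t}" "integral {s..t} (FF N M y i) = y i t - y i s"
proof -
  have h: "(FF N M y i has_integral (y i t - y i s)) {s..t}" using assms unfolding sysR_def by blast
  show "FF N M y i integrable_on {s..t}" using h by (rule has_integral_integrable)
  show "integral {s..t} (FF N M y i) = y i t - y i s" using h by (rule integral_unique)
qed

lemma sys_cont:
  assumes "sysR N M y" "i \<in> {1..N}" "0 \<le> a"
  shows "continuous_on {a..b} (y i)"
proof -
  have "continuous_on {0..b} (y i)" using assms unfolding sysR_def by blast
  then show ?thesis by (rule continuous_on_subset) (use assms in auto)
qed

lemma pos_step:
  assumes rng: "rngM N M" and sys: "sysR N M y" and a: "a \<ge> 0"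
    and ya: "\<forall>i\<in>{1..N}. y i a \<ge> 0"
  shows "\<forall>i\<in>{1..N}. \<forall>u\<in>{a..a+1/2}. y i u \<ge> 0"
proof -
  have "compact (\<Union>i\<in>{1..N}. y i ` {a..a+1/2})"
    by (intro compact_UN finite_atLeastAtMost compact_continuous_image sys_cont[OF sys _ a]) auto
  then obtain B0 where B0: "\<forall>z\<in>(\<Union>i\<in>{1..N}. y i ` {a..a+1/2}). \<bar>z\<bar> \<le> B0"
    using compact_imp_bounded bounded_real by metis
  define B where "B = \<bar>B0\<bar>"
  have B: "B \<ge> 0" "\<forall>i\<in>{1..N}. \<forall>u\<in>{a..a+1/2}. y i u \<ge> -B"
  proof -
    show "B \<ge> 0" unfolding B_def by simp
    show "\<forall>i\<in>{1..N}. \<forall>u\<in>{a..a+1/2}. y i u \<ge> -B"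
    proof (intro ballI)
      fix i u assume "i \<in> {1..N}" "u \<in> {a..a+1/2}"
      then have "\<bar>y i u\<bar> \<le> B0" using B0 by blast
      then show "y i u \<ge> -B" unfolding B_def by linarith
    qed
  qed
  have halve: "\<forall>i\<in>{1..N}. \<forall>u\<in>{a..a+1/2}. y i u \<ge> -(B'/2)"
    if B'0: "B' \<ge> 0" and hB: "\<forall>i\<in>{1..N}. \<forall>u\<in>{a..a+1/2}. y i u \<ge> -B'" for B'
  proof (intro ballI)
    fix i u assume i: "i \<in> {1..N}" and u: "u \<in> {a..a+1/2}"
    show "y i u \<ge> -(B'/2)"
    proof (cases "y i u \<ge> 0")
      case True then show ?thesis using B'0 by simp
    next
      case False
      obtain r where r: "a \<le> r" "r \<le> u" "y i r = 0" "\<forall>v. r \<le> v \<and> v \<le> u \<longrightarrow> y i v \<le> 0"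
        using first_exit[of a u "y i"] u ya i sys_cont[OF sys i a] False by auto
      have "integral {r..u} (\<lambda>_. -B') \<le> integral {r..u} (FF N M y i)"
      proof (rule integral_le)
        show "FF N M y i integrable_on {r..u}" using sys_int(1)[OF sys i _ r(2)] r a by simp
        fix v assume v: "v \<in> {r..u}"
        show "-B' \<le> FF N M y i v"
          by (rule P1[OF rng _ i _ _ B'0]) (use v r a u hB in auto)
      qed auto
      then have "-B' * (u - r) \<le> y i u - y i r"
        using sys_int(2)[OF sys i _ r(2)] r a by (simp add: mult.commute)
      moreover have "-B' * (u - r) \<ge> -B' * (1/2)" using r u B'0 by (intro mult_left_mono_neg) auto
      ultimately show ?thesis using r by simp
    qed
  qed
  have hk: "\<forall>i\<in>{1..N}. \<forall>u\<in>{a..a+1/2}. y i u \<ge> -(B / 2^k)" for k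
  proof (induction k)
    case 0 then show ?case using B by simp
  next
    case (Suc k)
    have "\<forall>i\<in>{1..N}. \<forall>u\<in>{a..a+1/2}. y i u \<ge> -((B / 2^k)/2)"
      by (rule halve) (use B Suc in auto)
    then show ?case by (simp add: field_simps)
  qed
  show ?thesis
  proof (intro ballI)
    fix i u assume i: "i \<in> {1..N}" and u: "u \<in> {a..a+1/2}"
    show "y i u \<ge> 0"
    proof (rule ccontr)
      assume "\<not> y i u \<ge> 0"
      then have pos: "- y i u / (B + 1) > 0" using B(1) by (intro divide_pos_pos) auto
      obtain k where k: "(1/2::real)^k < - y i u / (B + 1)"
        using real_arch_pow_inv[OF pos, of "1/2"] by auto
      have "B / 2^k \<le> (B+1) * (1/2)^k" using B by (simp add: field_simps)
      also have "\<dots> < (B+1) * (- y i u / (B + 1))" using k B by (intro mult_strict_left_mono) auto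
      also have "\<dots> = - y i u" using B by simp
      moreover have "y i u \<ge> -(B / 2^k)" using hk[of k] i u by blast
      ultimately show False by linarith
    qed
  qed
qed

lemma pos_all:
  assumes rng: "rngM N M" and sys: "sysR N M y" and a: "a \<ge> 0"
    and ya: "\<forall>i\<in>{1..N}. y i a \<ge> 0"
  shows "\<forall>i\<in>{1..N}. \<forall>t\<ge>a. y i t \<ge> 0"
proof -
  have n: "\<forall>i\<in>{1..N}. \<forall>u\<in>{a..a+real n/2}. y i u \<ge> 0" for n
  proof (induction n)
    case 0 then show ?case using ya by simp
  next
    case (Suc n)
    have st: "\<forall>i\<in>{1..N}. \<forall>u\<in>{a+real n/2..a+real n/2+1/2}. y i u \<ge> 0"
      by (rule pos_step[OF rng sys]) (use a Suc in auto)
    show ?case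
    proof (intro ballI)
      fix i u assume i: "i \<in> {1..N}" and u: "u \<in> {a..a+real (Suc n)/2}"
      show "y i u \<ge> 0"
      proof (cases "u \<le> a + real n/2")
        case True then have "u \<in> {a..a+real n/2}" using u by simp
        then show ?thesis using Suc i by blast
      next
        case False
        then have "u \<in> {a+real n/2..a+real n/2+1/2}" using u by (simp add: field_simps)
        then show ?thesis using st i by blast
      qed
    qed
  qed
  show ?thesis
  proof (intro ballI allI impI)
    fix i t assume i: "i \<in> {1..N}" and t: "t \<ge> a"
    obtain n :: nat where "real n \<ge> 2 * (t - a)" using real_arch_simple by blast
    then have "t \<in> {a..a+real n/2}" using t by simp
    then show "y i t \<ge> 0" using n[of n] i by blast
  qed
qed

lemma decay:
  assumes rng: "rngM N M" and sys: "sysR N M y" and t0: "t0 \<ge> 0"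
    and pos: "\<forall>k\<in>{1..N}. \<forall>t\<ge>t0. y k t \<ge> 0" and i: "i \<in> {1..N}"
    and r: "t0 \<le> r" "r \<le> t"
  shows "y i t \<ge> exp (-(t-r)) * y i r"
proof -
  have "y i t \<ge> exp (-1*(t-r)) * y i r"
  proof (rule exp_compare[OF r(2)])
    show "continuous_on {r..t} (y i)" using sys_cont[OF sys i] t0 r by auto
    fix r' t' assume h: "r \<le> r'" "r' \<le> t'" "t' \<le> t"
    have "integral {r'..t'} (\<lambda>u. - y i u) \<le> integral {r'..t'} (FF N M y i)"
    proof (rule integral_le)
      show "FF N M y i integrable_on {r'..t'}" using sys_int(1)[OF sys i _ h(2)] t0 r h by simp
      show "(\<lambda>u. - y i u) integrable_on {r'..t'}"
        by (intro integrable_continuous_interval continuous_intros sys_cont[OF sys i]) (use t0 r h in auto)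
      fix v assume v: "v \<in> {r'..t'}"
      show "- y i v \<le> FF N M y i v"
        by (rule P2[OF rng _ i]) (use v r h t0 pos in auto)
    qed
    then have "- integral {r'..t'} (y i) \<le> y i t' - y i r'"
      using sys_int(2)[OF sys i _ h(2)] t0 r h by (simp add: integral_neg)
    then show "y i t' - y i r' \<ge> - 1 * integral {r'..t'} (y i)" by simp
  qed auto
  then show ?thesis by simp
qed

lemma boost:
  assumes rng: "rngM N M" and sys: "sysR N M y" and t0: "t0 \<ge> 0"
    and pos: "\<forall>k\<in>{1..N}. \<forall>t\<ge>t0. y k t \<ge> 0" and i: "i \<in> {1..N}" and j: "j \<in> {1..N}"
    and s: "s \<ge> t0" and T: "T > 0"
    and intM: "M i j integrable_on {s..s+T}" and intge: "integral {s..s+T} (M i j) \<ge> \<mu> * T"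
    and Bj: "\<forall>u\<in>{s..s+T}. y j u \<ge> Bv" and Bv: "Bv \<ge> 0"
  shows "y i (s+T) \<ge> exp (-T) * (Bv * (\<mu> * T) / real N)"
proof -
  define Z where "Z = y i (s+T)"
  have N: "real N > 0" using i by auto
  have iy: "y i integrable_on {s..s+T}"
    by (intro integrable_continuous_interval sys_cont[OF sys i]) (use t0 s in auto)
  have iM: "(\<lambda>u. (Bv / real N) * M i j u) integrable_on {s..s+T}"
    using intM by (rule integrable_on_mult_right)
  have "integral {s..s+T} (\<lambda>u. (Bv / real N) * M i j u - y i u) \<le> integral {s..s+T} (FF N M y i)"
  proof (rule integral_le)
    show "FF N M y i integrable_on {s..s+T}" using sys_int(1)[OF sys i, of s "s+T"] t0 s T by simp
    show "(\<lambda>u. (Bv / real N) * M i j u - y i u) integrable_on {s..s+T}"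
      by (rule integrable_diff[OF iM iy])
    fix v assume v: "v \<in> {s..s+T}"
    have p: "\<forall>k\<in>{1..N}. y k v \<ge> 0" using pos v s by auto
    have "FF N M y i v \<ge> (1/real N) * M i j v * y j v - y i v"
      using P3[of N M v i j y] rng i j p v s t0 by auto
    moreover have "M i j v * y j v \<ge> M i j v * Bv"
      using rng i j v s t0 Bj unfolding rngM_def by (intro mult_left_mono) auto
    ultimately show "(Bv / real N) * M i j v - y i v \<le> FF N M y i v"
      using N by (simp add: field_simps)
  qed
  also have "\<dots> = Z - y i s" unfolding Z_def using sys_int(2)[OF sys i, of s "s+T"] t0 s T by simp
  finally have A0: "integral {s..s+T} (\<lambda>u. (Bv / real N) * M i j u - y i u) \<le> Z - y i s" .
  have "integral {s..s+T} (\<lambda>u. (Bv / real N) * M i j u - y i u) = (Bv / real N) * integral {s..s+T} (M i j) - integral {s..s+T} (y i)"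
    by (simp only: integral_diff[OF iM iy] integral_mult_right)
  with A0 have A: "(Bv / real N) * integral {s..s+T} (M i j) - integral {s..s+T} (y i) \<le> Z - y i s" by simp
  have "integral {s..s+T} (y i) \<le> integral {s..s+T} (\<lambda>u. Z * exp (-1*(u-(s+T))))"
  proof (rule integral_le[OF iy])
    show "(\<lambda>u. Z * exp (-1*(u-(s+T)))) integrable_on {s..s+T}"
      by (intro integrable_continuous_interval continuous_intros)
    fix v assume v: "v \<in> {s..s+T}"
    have "Z \<ge> exp (-(s+T-v)) * y i v" unfolding Z_def
      by (rule decay[OF rng sys t0 pos i]) (use v s in auto)
    then have "Z * exp (s+T-v) \<ge> exp (-(s+T-v)) * y i v * exp (s+T-v)"
      by (intro mult_right_mono) auto
    also have "exp (-(s+T-v)) * y i v * exp (s+T-v) = y i v * (exp (-(s+T-v)) * exp (s+T-v))"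
      by (simp add: algebra_simps)
    also have "\<dots> = y i v" by (simp flip: exp_add)
    finally show "y i v \<le> Z * exp (-1*(v-(s+T)))" by simp
  qed
  also have "\<dots> = - (1/1) * (Z * exp (-1*((s+T)-(s+T))) - Z * exp (-1*(s-(s+T))))"
    by (rule exp_integral) (use T in auto)
  also have "\<dots> = Z * exp T - Z" by simp
  finally have B: "integral {s..s+T} (y i) \<le> Z * exp T - Z" .
  have ys: "y i s \<ge> 0" using pos i s by auto
  have C: "(Bv / real N) * integral {s..s+T} (M i j) \<ge> (Bv / real N) * (\<mu> * T)"
    using intge Bv N by (intro mult_left_mono) auto
  have "Z * exp T \<ge> Bv * (\<mu> * T) / real N" using A B C ys by simp
  then have "exp (-T) * (Z * exp T) \<ge> exp (-T) * (Bv * (\<mu> * T) / real N)"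
    by (intro mult_left_mono) auto
  then show ?thesis unfolding Z_def by (simp add: exp_minus field_simps)
qed

lemma chain:
  fixes E :: "(nat \<times> nat) set"
  assumes rng: "rngM N M" and sys: "sysR N M y" and T: "T > 0" and mu: "\<mu> > 0"
    and t0: "t0 = real m * T"
    and E: "E \<subseteq> {1..N} \<times> {1..N}"
    and Econn: "\<forall>k::nat. \<forall>(i, j)\<in>E. conn_arrow T \<mu> M (real k * T) i j"
    and I: "I \<in> {1..N}" and pos0: "\<forall>k\<in>{1..N}. y k t0 \<ge> 0"
    and hI: "y I t0 \<ge> h" and h: "h \<ge> 0" and q: "q = \<mu> * T / (real N + \<mu> * T)"
  shows "(i, I) \<in> E ^^ k \<Longrightarrow> i \<in> {1..N} \<and>
     (\<forall>t \<ge> t0 + real k * T. y i t \<ge> h * q^k * exp (-(real k * T)) * exp (-(t - t0)))"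
proof (induction k arbitrary: i)
  have t00: "t0 \<ge> 0" using t0 T by simp
  have pos: "\<forall>k\<in>{1..N}. \<forall>t\<ge>t0. y k t \<ge> 0" by (rule pos_all[OF rng sys t00 pos0])
  case 0
  then have iI: "i = I" by (auto elim: relpow_0_E)
  show ?case
  proof (intro conjI allI impI)
    show "i \<in> {1..N}" using iI I by simp
    fix t assume t: "t \<ge> t0 + real 0 * T"
    have "y I t \<ge> exp (-(t-t0)) * y I t0" by (rule decay[OF rng sys t00 pos I]) (use t in auto)
    moreover have "exp (-(t-t0)) * y I t0 \<ge> exp (-(t-t0)) * h" using hI by (intro mult_left_mono) auto
    ultimately have "y I t \<ge> exp (-(t-t0)) * h" by linarith
    then show "y i t \<ge> h * q^0 * exp (-(real 0 * T)) * exp (-(t - t0))" using iI by (simp add: mult.commute)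
  qed
next
  have t00: "t0 \<ge> 0" using t0 T by simp
  have pos: "\<forall>k\<in>{1..N}. \<forall>t\<ge>t0. y k t \<ge> 0" by (rule pos_all[OF rng sys t00 pos0])
  case (Suc k)
  obtain j where ij: "(i, j) \<in> E" and jI: "(j, I) \<in> E ^^ k" using relpow_Suc_D2[OF Suc.prems] by blast
  have i: "i \<in> {1..N}" and j: "j \<in> {1..N}" using ij E by auto
  define A where "A = h * q^k * exp (-(real k * T))"
  have IH: "\<forall>t \<ge> t0 + real k * T. y j t \<ge> A * exp (-(t - t0))" using Suc.IH[OF jI] unfolding A_def by blast
  define s where "s = t0 + real k * T"
  have s_eq: "s = real (m + k) * T" unfolding s_def t0 by (simp add: algebra_simps)
  have conn: "(1 / T) * integral {s..s+T} (M i j) \<ge> \<mu>"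
    using Econn ij unfolding conn_arrow_def s_eq by fastforce
  have intge: "integral {s..s+T} (M i j) \<ge> \<mu> * T"
  proof -
    have "T * ((1 / T) * integral {s..s+T} (M i j)) \<ge> T * \<mu>" using conn T by (intro mult_left_mono) auto
    then show ?thesis using T by (simp add: mult.commute)
  qed
  have intM: "M i j integrable_on {s..s+T}"
  proof (rule ccontr)
    assume "\<not> M i j integrable_on {s..s+T}"
    then have "integral {s..s+T} (M i j) = 0" by (rule not_integrable_integral)
    moreover have "\<mu> * T > 0" using mu T by simp
    ultimately show False using intge by linarith
  qed
  have q0: "q \<ge> 0" using q mu T by simp
  have A0: "A \<ge> 0" unfolding A_def using h q0 by simp
  define Bv where "Bv = A * exp (-(s + T - t0))"
  have Bv0: "Bv \<ge> 0" unfolding Bv_def using A0 by simp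
  have Bj: "\<forall>u\<in>{s..s+T}. y j u \<ge> Bv"
  proof
    fix u assume u: "u \<in> {s..s+T}"
    have "y j u \<ge> A * exp (-(u - t0))" using IH u unfolding s_def by auto
    moreover have "A * exp (-(u - t0)) \<ge> Bv" unfolding Bv_def using A0 u by (intro mult_left_mono) auto
    ultimately show "y j u \<ge> Bv" by linarith
  qed
  have st0: "s \<ge> t0" unfolding s_def using T by simp
  have b: "y i (s+T) \<ge> exp (-T) * (Bv * (\<mu> * T) / real N)"
    by (rule boost[OF rng sys t00 pos i j st0 T intM intge Bj Bv0])
  have N: "real N > 0" using i by auto
  have qle: "q \<le> \<mu> * T / real N" unfolding q using mu T N by (intro divide_left_mono) (auto intro!: mult_pos_pos add_pos_pos)
  have "Bv * q \<le> Bv * (\<mu> * T / real N)" using qle Bv0 by (rule mult_left_mono)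
  then have "Bv * (\<mu> * T) / real N \<ge> Bv * q" by simp
  then have b2: "y i (s+T) \<ge> exp (-T) * (Bv * q)" using b by (smt (verit) exp_gt_zero mult_left_mono)
  show ?case
  proof (intro conjI allI impI)
    show "i \<in> {1..N}" by (rule i)
    fix t assume t: "t \<ge> t0 + real (Suc k) * T"
    have ts: "s + T \<le> t" using t unfolding s_def by (simp add: algebra_simps)
    have h1: "y i t \<ge> exp (-(t-(s+T))) * y i (s+T)"
      by (rule decay[OF rng sys t00 pos i]) (use ts st0 T in auto)
    have h2: "exp (-(t-(s+T))) * y i (s+T) \<ge> exp (-(t-(s+T))) * (exp (-T) * (Bv * q))"
      using b2 by (intro mult_left_mono) auto
    have h3: "exp (-(t-(s+T))) * (exp (-T) * (Bv * q)) = h * q^(Suc k) * (exp (-(t-(s+T))) * exp (-T) * exp (-(real k * T)) * exp (-(s + T - t0)))"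
      unfolding Bv_def A_def by (simp add: algebra_simps)
    have h4: "exp (-(t-(s+T))) * exp (-T) * exp (-(real k * T)) * exp (-(s + T - t0)) = exp (-(real (Suc k) * T)) * exp (-(t - t0))"
      unfolding s_def by (simp flip: exp_add add: algebra_simps)
    have h5: "exp (-(t-(s+T))) * (exp (-T) * (Bv * q)) = h * q^(Suc k) * (exp (-(real (Suc k) * T)) * exp (-(t - t0)))"
      by (simp only: h3 h4)
    have "y i t \<ge> h * q^(Suc k) * (exp (-(real (Suc k) * T)) * exp (-(t - t0)))"
      using h1 h2 h5 by linarith
    then show "y i t \<ge> h * q^(Suc k) * exp (-(real (Suc k) * T)) * exp (-(t - t0))"
      by (simp only: mult.assoc)
  qed
qed

lemma sysR_neg: "sysR N M p \<Longrightarrow> sysR N M (\<lambda>k u. c - p k u)"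
  using sysR_affine[of N M p c "-1"] by simp

lemma sysR_sub: "sysR N M p \<Longrightarrow> sysR N M (\<lambda>k u. p k u - c)"
  using sysR_affine[of N M p "-c" 1] by simp

lemma dist_facts:
  assumes reach: "globally_reachable N E I" and i: "i \<in> {1..N}"
  shows "(i, I) \<in> E ^^ path_dist E i I" "path_dist E i I \<le> graph_length N E I"
proof -
  have "(i, I) \<in> E\<^sup>*" using reach i unfolding globally_reachable_def by blast
  then obtain n where "(i, I) \<in> E ^^ n" using rtrancl_power by blast
  then show "(i, I) \<in> E ^^ path_dist E i I" unfolding path_dist_def by (rule LeastI)
  show "path_dist E i I \<le> graph_length N E I"
    unfolding graph_length_def by (rule Max_ge) (use i in auto)
qed

lemma lower_all:
  fixes E :: "(nat \<times> nat) set"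
  assumes rng: "rngM N M" and sys: "sysR N M y" and T: "T > 0" and mu: "\<mu> > 0"
    and t0: "t0 = real m * T"
    and E: "E \<subseteq> {1..N} \<times> {1..N}"
    and Econn: "\<forall>k::nat. \<forall>(i, j)\<in>E. conn_arrow T \<mu> M (real k * T) i j"
    and reach: "globally_reachable N E I" and pos0: "\<forall>k\<in>{1..N}. y k t0 \<ge> 0"
    and hI: "y I t0 \<ge> h" and h: "h \<ge> 0" and q: "q = \<mu> * T / (real N + \<mu> * T)"
    and d: "d = graph_length N E I"
    and i: "i \<in> {1..N}"
  shows "y i (t0 + real d * T) \<ge> h * q^d * exp (-2 * real d * T)"
proof -
  have I: "I \<in> {1..N}" using reach unfolding globally_reachable_def by blast
  define k where "k = path_dist E i I"
  have kI: "(i, I) \<in> E ^^ k" and kd: "k \<le> d" using dist_facts[OF reach i] unfolding k_def d by auto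
  have ch: "\<forall>t \<ge> t0 + real k * T. y i t \<ge> h * q^k * exp (-(real k * T)) * exp (-(t - t0))"
    using chain[OF rng sys T mu t0 E Econn I pos0 hI h q kI] by blast
  have y1: "y i (t0 + real d * T) \<ge> h * q^k * exp (-(real k * T)) * exp (-(real d * T))"
    using ch[rule_format, of "t0 + real d * T"] kd T by (simp add: mult_right_mono)
  have mT: "\<mu> * T > 0" using mu T by simp
  have q0: "q \<ge> 0" "q \<le> 1" using q mT by (auto simp: divide_le_eq_1)
  have "q^d \<le> q^k" using q0 kd by (intro power_decreasing) auto
  moreover have "exp (-(real d * T)) \<le> exp (-(real k * T))" using kd T by (simp add: mult_right_mono)
  ultimately have "q^d * exp (-(real d * T)) \<le> q^k * exp (-(real k * T))"
    using q0 by (intro mult_mono) auto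
  then have "h * (q^d * exp (-(real d * T))) * exp (-(real d * T)) \<le> h * (q^k * exp (-(real k * T))) * exp (-(real d * T))"
    using h by (intro mult_right_mono mult_left_mono) auto
  moreover have "h * (q^d * exp (-(real d * T))) * exp (-(real d * T)) = h * q^d * exp (-2 * real d * T)"
  proof -
    have e2: "exp (-(real d * T)) * exp (-(real d * T)) = exp (-2 * real d * T)" by (simp flip: exp_add)
    show ?thesis by (simp only: mult.assoc e2)
  qed
  moreover have "h * (q^k * exp (-(real k * T))) * exp (-(real d * T)) = h * q^k * exp (-(real k * T)) * exp (-(real d * T))"
    by (simp only: mult.assoc)
  ultimately show ?thesis using y1 by linarith
qed

lemma minmax:
  fixes p :: "nat \<Rightarrow> real \<Rightarrow> real"
  assumes N: "N \<ge> 1" and sp: "\<forall>k\<in>{1..N}. \<forall>l\<in>{1..N}. p k t0 - p l t0 \<le> S"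
  obtains Mx mn where "\<forall>k\<in>{1..N}. mn \<le> p k t0 \<and> p k t0 \<le> Mx" "Mx - mn \<le> S" "mn \<le> Mx"
proof -
  let ?A = "(\<lambda>k. p k t0) ` {1..N}"
  have fin: "finite ?A" and ne: "?A \<noteq> {}" using N by auto
  obtain kM where kM: "kM \<in> {1..N}" "p kM t0 = Max ?A" using Max_in[OF fin ne] by auto
  obtain km where km: "km \<in> {1..N}" "p km t0 = Min ?A" using Min_in[OF fin ne] by auto
  have b: "\<forall>k\<in>{1..N}. Min ?A \<le> p k t0 \<and> p k t0 \<le> Max ?A" using fin by auto
  moreover have "Max ?A - Min ?A \<le> S" using sp kM km by metis
  moreover have "Min ?A \<le> Max ?A" using b kM by auto
  ultimately show ?thesis using that by blast
qed

lemma spread_mono: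
  assumes rng: "rngM N M" and sys: "sysR N M p" and t0: "t0 \<ge> 0" and t1: "t1 \<ge> t0" and N: "N \<ge> 1"
    and sp: "\<forall>k\<in>{1..N}. \<forall>l\<in>{1..N}. p k t0 - p l t0 \<le> S"
  shows "\<forall>k\<in>{1..N}. \<forall>l\<in>{1..N}. p k t1 - p l t1 \<le> S"
proof -
  obtain Mx mn where b: "\<forall>k\<in>{1..N}. mn \<le> p k t0 \<and> p k t0 \<le> Mx" and S: "Mx - mn \<le> S"
    using minmax[of N p t0 S, OF N sp] by blast
  have up: "\<forall>k\<in>{1..N}. \<forall>t\<ge>t0. Mx - p k t \<ge> 0"
    by (rule pos_all[OF rng sysR_neg[OF sys] t0]) (use b in auto)
  have lo: "\<forall>k\<in>{1..N}. \<forall>t\<ge>t0. p k t - mn \<ge> 0"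
    by (rule pos_all[OF rng sysR_sub[OF sys] t0]) (use b in auto)
  show ?thesis
  proof (intro ballI)
    fix k l assume k: "k \<in> {1..N}" and l: "l \<in> {1..N}"
    have "Mx - p k t1 \<ge> 0" using up k t1 by blast
    moreover have "p l t1 - mn \<ge> 0" using lo l t1 by blast
    ultimately show "p k t1 - p l t1 \<le> S" using S by linarith
  qed
qed

lemma spread_contract:
  fixes E :: "(nat \<times> nat) set"
  assumes rng: "rngM N M" and sys: "sysR N M p" and T: "T > 0" and mu: "\<mu> > 0"
    and t0: "t0 = real m * T"
    and E: "E \<subseteq> {1..N} \<times> {1..N}"
    and Econn: "\<forall>k::nat. \<forall>(i, j)\<in>E. conn_arrow T \<mu> M (real k * T) i j"
    and reach: "globally_reachable N E I"
    and d: "d = graph_length N E I"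
    and C: "C = 1 - (1/2) * (\<mu> * T / (real N + \<mu> * T)) ^ d * exp (- 2 * real d * T)"
    and sp: "\<forall>k\<in>{1..N}. \<forall>l\<in>{1..N}. p k t0 - p l t0 \<le> S"
  shows "\<forall>k\<in>{1..N}. \<forall>l\<in>{1..N}. p k (t0 + real d * T) - p l (t0 + real d * T) \<le> C * S"
proof -
  have I: "I \<in> {1..N}" using reach unfolding globally_reachable_def by blast
  then have N: "N \<ge> 1" by simp
  have t00: "t0 \<ge> 0" using t0 T by simp
  define q where "q = \<mu> * T / (real N + \<mu> * T)"
  define t1 where "t1 = t0 + real d * T"
  have t1: "t1 \<ge> t0" unfolding t1_def using T by simp
  have mT: "\<mu> * T > 0" using mu T by simp
  have q0: "q \<ge> 0" "q \<le> 1" unfolding q_def using mT by (auto simp: divide_le_eq_1)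
  define \<epsilon> where "\<epsilon> = (1/2) * q^d * exp (-2 * real d * T)"
  have Ce: "C = 1 - \<epsilon>" unfolding C \<epsilon>_def q_def by simp
  have "q^d \<le> 1" using q0 by (simp add: power_le_one)
  moreover have "exp (-2 * real d * T) \<le> 1" using T by simp
  ultimately have "q^d * exp (-2 * real d * T) \<le> 1" using q0 by (simp add: mult_le_one)
  then have C0: "C \<ge> 0" unfolding Ce \<epsilon>_def by simp
  obtain Mx mn where b: "\<forall>k\<in>{1..N}. mn \<le> p k t0 \<and> p k t0 \<le> Mx" and S: "Mx - mn \<le> S" and mm: "mn \<le> Mx"
    using minmax[of N p t0 S, OF N sp] by blast
  have up: "\<forall>k\<in>{1..N}. \<forall>t\<ge>t0. Mx - p k t \<ge> 0"
    by (rule pos_all[OF rng sysR_neg[OF sys] t00]) (use b in auto)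
  have lo: "\<forall>k\<in>{1..N}. \<forall>t\<ge>t0. p k t - mn \<ge> 0"
    by (rule pos_all[OF rng sysR_sub[OF sys] t00]) (use b in auto)
  have hh: "(Mx - mn) / 2 \<ge> 0" using mm by simp
  have key: "(Mx - mn) / 2 * q^d * exp (-2 * real d * T) = (Mx - mn) * \<epsilon>" unfolding \<epsilon>_def by simp
  have CS: "C * (Mx - mn) \<le> C * S" using C0 S by (intro mult_left_mono) auto
  show ?thesis
  proof (cases "p I t0 \<le> (Mx + mn) / 2")
    case True
    have L: "\<forall>i\<in>{1..N}. Mx - p i t1 \<ge> (Mx - mn) / 2 * q^d * exp (-2 * real d * T)"
    proof
      fix i assume i: "i \<in> {1..N}"
      show "Mx - p i t1 \<ge> (Mx - mn) / 2 * q^d * exp (-2 * real d * T)"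
        unfolding t1_def
        by (rule lower_all[OF rng sysR_neg[OF sys] T mu t0 E Econn reach _ _ hh q_def d i]) (use b True in auto)
    qed
    show ?thesis
    proof (intro ballI)
      fix k l assume k: "k \<in> {1..N}" and l: "l \<in> {1..N}"
      have "Mx - p k t1 \<ge> (Mx - mn) / 2 * q^d * exp (-2 * real d * T)" using L k by blast
      then have "Mx - p k t1 \<ge> (Mx - mn) * \<epsilon>" using key by linarith
      moreover have "p l t1 - mn \<ge> 0" using lo l t1 by blast
      ultimately have "p k t1 - p l t1 \<le> C * (Mx - mn)" unfolding Ce by (simp add: algebra_simps)
      then show "p k (t0 + real d * T) - p l (t0 + real d * T) \<le> C * S" using CS unfolding t1_def by linarith
    qed
  next
    case False
    have L: "\<forall>i\<in>{1..N}. p i t1 - mn \<ge> (Mx - mn) / 2 * q^d * exp (-2 * real d * T)"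
    proof
      fix i assume i: "i \<in> {1..N}"
      show "p i t1 - mn \<ge> (Mx - mn) / 2 * q^d * exp (-2 * real d * T)"
        unfolding t1_def
        by (rule lower_all[OF rng sysR_sub[OF sys] T mu t0 E Econn reach _ _ hh q_def d i]) (use b False in auto)
    qed
    show ?thesis
    proof (intro ballI)
      fix k l assume k: "k \<in> {1..N}" and l: "l \<in> {1..N}"
      have "p l t1 - mn \<ge> (Mx - mn) / 2 * q^d * exp (-2 * real d * T)" using L l by blast
      then have "p l t1 - mn \<ge> (Mx - mn) * \<epsilon>" using key by linarith
      moreover have "Mx - p k t1 \<ge> 0" using up k t1 by blast
      ultimately have "p k t1 - p l t1 \<le> C * (Mx - mn)" unfolding Ce by (simp add: algebra_simps)
      then show "p k (t0 + real d * T) - p l (t0 + real d * T) \<le> C * S" using CS unfolding t1_def by linarith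
    qed
  qed
qed

lemma cont_Max:
  fixes g :: "nat \<Rightarrow> real \<Rightarrow> real"
  assumes "finite A" "A \<noteq> {}" "\<forall>k\<in>A. continuous_on S (g k)"
  shows "continuous_on S (\<lambda>u. Max ((\<lambda>k. g k u) ` A))"
  using assms
proof (induction A rule: finite_ne_induct)
  case (singleton x) then show ?case by simp
next
  case (insert x F)
  have "continuous_on S (\<lambda>u. max (g x u) (Max ((\<lambda>k. g k u) ` F)))"
    using insert by (intro continuous_on_max) auto
  then show ?case using insert by (simp add: Max_insert)
qed

lemma cont_Min:
  fixes g :: "nat \<Rightarrow> real \<Rightarrow> real"
  assumes "finite A" "A \<noteq> {}" "\<forall>k\<in>A. continuous_on S (g k)"
  shows "continuous_on S (\<lambda>u. Min ((\<lambda>k. g k u) ` A))"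
  using assms
proof (induction A rule: finite_ne_induct)
  case (singleton x) then show ?case by simp
next
  case (insert x F)
  have "continuous_on S (\<lambda>u. min (g x u) (Min ((\<lambda>k. g k u) ` F)))"
    using insert by (intro continuous_on_min) auto
  then show ?case using insert by (simp add: Min_insert)
qed

lemma spread_growth:
  assumes rng: "rngM N M" and sys: "sysR N M p" and N: "N \<ge> 2" and s: "0 \<le> s" "s \<le> s'"
  defines "Sp \<equiv> (\<lambda>u. Max ((\<lambda>k. p k u) ` {1..N}) - Min ((\<lambda>k. p k u) ` {1..N}))"
  shows "Sp s' \<ge> exp (- (2 * ((real N - 1) / real N)) * (s' - s)) * Sp s"
proof (rule exp_compare[OF s(2)])
  let ?A = "\<lambda>u. (\<lambda>k. p k u) ` {1..N}"
  have fin: "finite (?A u)" and ne: "?A u \<noteq> {}" for u using N by auto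
  have Nr: "real N \<ge> 2" using N by simp
  show "2 * ((real N - 1) / real N) > 0" using Nr by simp
  have cS: "continuous_on {a..b} Sp" if "0 \<le> a" for a b
    unfolding Sp_def
    by (intro continuous_intros cont_Max cont_Min ballI sys_cont[OF sys _ that]) (use N in auto)
  show "continuous_on {s..s'} Sp" using cS s by simp
  fix r t assume rt: "s \<le> r" "r \<le> t" "t \<le> s'"
  have r0: "0 \<le> r" using rt s by simp
  obtain i where i: "i \<in> {1..N}" "p i r = Max (?A r)" using Max_in[OF fin ne, of r] by auto
  obtain j where j: "j \<in> {1..N}" "p j r = Min (?A r)" using Min_in[OF fin ne, of r] by auto
  have bnd: "Min (?A u) \<le> p k u \<and> p k u \<le> Max (?A u)" if "k \<in> {1..N}" for k u
    using fin that by auto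
  have Sp0: "Sp u \<ge> 0" for u using bnd[OF i(1), of u] unfolding Sp_def by simp
  define c2 where "c2 = (real N - 1) / real N"
  have iSp: "(\<lambda>u. - c2 * Sp u) integrable_on {r..t}"
    by (intro integrable_continuous_interval continuous_intros continuous_on_subset[OF cS[OF r0, of t]]) auto
  have Ii: "integral {r..t} (\<lambda>u. - c2 * Sp u) \<le> integral {r..t} (FF N M p i)"
  proof (rule integral_le[OF iSp])
    show "FF N M p i integrable_on {r..t}" by (rule sys_int(1)[OF sys i(1) r0 rt(2)])
    fix u assume u: "u \<in> {r..t}"
    have pre: "\<forall>k\<in>{1..N}. p k u - p i u \<ge> - Sp u"
    proof
      fix k assume k: "k \<in> {1..N}"
      show "p k u - p i u \<ge> - Sp u" using bnd[OF k, of u] bnd[OF i(1), of u] unfolding Sp_def by linarith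
    qed
    show "- c2 * Sp u \<le> FF N M p i u"
      unfolding c2_def
      using P4[where N=N and M=M and u=u and i=i and y=p and S="Sp u", OF rng _ i(1) pre Sp0] u r0 by auto
  qed
  have Ij: "integral {r..t} (\<lambda>u. - c2 * Sp u) \<le> integral {r..t} (\<lambda>u. - FF N M p j u)"
  proof (rule integral_le[OF iSp])
    show "(\<lambda>u. - FF N M p j u) integrable_on {r..t}"
      by (rule integrable_neg, rule sys_int(1)[OF sys j(1) r0 rt(2)])
    fix u assume u: "u \<in> {r..t}"
    have pre: "\<forall>k\<in>{1..N}. (\<lambda>k u. 0 + (-1) * p k u) k u - (\<lambda>k u. 0 + (-1) * p k u) j u \<ge> - Sp u"
    proof
      fix k assume k: "k \<in> {1..N}"
      show "(\<lambda>k u. 0 + (-1) * p k u) k u - (\<lambda>k u. 0 + (-1) * p k u) j u \<ge> - Sp u"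
        using bnd[OF k, of u] bnd[OF j(1), of u] unfolding Sp_def by simp
    qed
    have "FF N M (\<lambda>k u. 0 + (-1) * p k u) j u \<ge> - c2 * Sp u"
      unfolding c2_def
      using P4[where N=N and M=M and u=u and i=j and y="\<lambda>k u. 0 + (-1) * p k u" and S="Sp u", OF rng _ j(1) pre Sp0] u r0 by auto
    then show "- c2 * Sp u \<le> - FF N M p j u" unfolding FF_affine by simp
  qed
  have "integral {r..t} (\<lambda>u. - FF N M p j u) = - (p j t - p j r)"
    using sys_int(2)[OF sys j(1) r0 rt(2)] by (simp add: integral_neg)
  moreover have "integral {r..t} (FF N M p i) = p i t - p i r"
    using sys_int(2)[OF sys i(1) r0 rt(2)] by simp
  moreover have "integral {r..t} (\<lambda>u. - c2 * Sp u) = - c2 * integral {r..t} Sp"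
    by (simp add: integral_mult_right)
  moreover have "Sp t \<ge> p i t - p j t" using bnd[OF i(1), of t] bnd[OF j(1), of t] unfolding Sp_def by simp
  moreover have "Sp r = p i r - p j r" unfolding Sp_def using i j by simp
  ultimately have "Sp t - Sp r \<ge> - c2 * integral {r..t} Sp + (- c2 * integral {r..t} Sp)"
    using Ii Ij by linarith
  moreover have "- c2 * integral {r..t} Sp + (- c2 * integral {r..t} Sp) = - (2 * c2) * integral {r..t} Sp"
    by (simp add: algebra_simps)
  ultimately have "Sp t - Sp r \<ge> - (2 * c2) * integral {r..t} Sp" by linarith
  then show "Sp t - Sp r \<ge> - (2 * ((real N - 1) / real N)) * integral {r..t} Sp"
    by (simp only: c2_def)
qed

lemma sys_from_sol:
  fixes x :: "nat \<Rightarrow> real \<Rightarrow> 'a::euclidean_space" and M :: "nat \<Rightarrow> nat \<Rightarrow> real \<Rightarrow> real"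
  assumes sol: "\<forall>i\<in>{1..N}. \<forall>t\<ge>0.
       ((\<lambda>s. (1 / real N) *\<^sub>R (\<Sum>j=1..N. M i j s *\<^sub>R (x j s - x i s))) has_integral (x i t - x i 0)) {0..t}"
  shows "sysR N M (\<lambda>k u. x k u \<bullet> v)"
proof -
  define f where "f i = (\<lambda>s. (1 / real N) *\<^sub>R (\<Sum>j=1..N. M i j s *\<^sub>R (x j s - x i s)))" for i
  have hi: "(f i has_integral (x i t - x i 0)) {0..t}" if "i \<in> {1..N}" "0 \<le> t" for i t
    using sol that unfolding f_def by blast
  have FFe: "FF N M (\<lambda>k u. x k u \<bullet> v) i = (\<lambda>z. z \<bullet> v) \<circ> f i" for i
    unfolding FF_def f_def by (rule ext) (simp add: inner_sum_left inner_diff_left)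
  have cont: "continuous_on {0..b} (\<lambda>u. x i u \<bullet> v)" if i: "i \<in> {1..N}" for i b
  proof (cases "b < 0")
    case True then show ?thesis by simp
  next
    case False
    have "f i integrable_on {0..b}" using hi[OF i, of b] False by auto
    then have "continuous_on {0..b} (\<lambda>t. integral {0..t} (f i))" by (rule indefinite_integral_continuous_1)
    then have c1: "continuous_on {0..b} (\<lambda>t. x i 0 + integral {0..t} (f i))" by (intro continuous_intros)
    have "continuous_on {0..b} (x i)"
    proof (rule continuous_on_eq[OF c1])
      fix t assume "t \<in> {0..b}"
      then show "x i 0 + integral {0..t} (f i) = x i t" using integral_unique[OF hi[OF i, of t]] by simp
    qed
    then show ?thesis by (intro continuous_intros)
  qed
  have int: "(FF N M (\<lambda>k u. x k u \<bullet> v) i has_integral ((x i t \<bullet> v) - (x i s \<bullet> v))) {s..t}"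
    if i: "i \<in> {1..N}" and st: "0 \<le> s" "s \<le> t" for i s t
  proof -
    have it: "f i integrable_on {0..t}" using hi[OF i, of t] st by auto
    have ist: "f i integrable_on {s..t}" by (rule integrable_subinterval_real[OF it]) (use st in auto)
    have "integral {0..s} (f i) + integral {s..t} (f i) = integral {0..t} (f i)"
      by (rule Henstock_Kurzweil_Integration.integral_combine) (use st it in auto)
    moreover have "integral {0..s} (f i) = x i s - x i 0" using integral_unique[OF hi[OF i, of s]] st by simp
    moreover have "integral {0..t} (f i) = x i t - x i 0" using integral_unique[OF hi[OF i, of t]] st by simp
    ultimately have "integral {s..t} (f i) = x i t - x i s" by (simp add: algebra_simps)
    then have "(f i has_integral (x i t - x i s)) {s..t}" using ist by (metis has_integral_integrable_integral)
    then have "(((\<lambda>z. z \<bullet> v) \<circ> f i) has_integral ((x i t - x i s) \<bullet> v)) {s..t}"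
      by (rule has_integral_linear) (rule bounded_linear_inner_left)
    then show ?thesis unfolding FFe by (simp add: inner_diff_left)
  qed
  show ?thesis unfolding sysR_def using cont int by auto
qed

lemma diam_finite: fixes N :: nat shows "finite {norm (x i t - x j t) | i j. i \<in> {1..N} \<and> j \<in> {1..N}}"
proof -
  have "{norm (x i t - x j t) | i j. i \<in> {1..N} \<and> j \<in> {1..N}} = (\<lambda>(i,j). norm (x i t - x j t)) ` ({1..N} \<times> {1..N})"
    by (auto simp: image_iff) (metis atLeastAtMost_iff)
  moreover have "finite ((\<lambda>(i,j). norm (x i t - x j t)) ` ({1..N} \<times> {1..N}))"
    by (intro finite_imageI finite_cartesian_product) auto
  ultimately show ?thesis by simp
qed

lemma diam_ge:
  assumes "i \<in> {1..N}" "j \<in> {1..N}"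
  shows "norm (x i t - x j t) \<le> diameter N x t"
  unfolding diameter_def by (rule Max_ge[OF diam_finite]) (use assms in blast)

lemma diam_nonneg:
  assumes "N \<ge> 1" shows "diameter N x t \<ge> 0"
  using diam_ge[of 1 N 1 x t] assms by auto

lemma diam_attained:
  assumes "N \<ge> 1"
  obtains i j where "i \<in> {1..N}" "j \<in> {1..N}" "diameter N x t = norm (x i t - x j t)"
proof -
  have ne: "{norm (x i t - x j t) | i j. i \<in> {1..N} \<and> j \<in> {1..N}} \<noteq> {}" using assms by auto
  have "diameter N x t \<in> {norm (x i t - x j t) | i j. i \<in> {1..N} \<and> j \<in> {1..N}}"
    unfolding diameter_def by (rule Max_in[OF diam_finite[of x t N] ne])
  then show ?thesis using that by blast
qed

lemma proj_le_diam:
  fixes x :: "nat \<Rightarrow> real \<Rightarrow> 'a::euclidean_space"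
  assumes "k \<in> {1..N}" "l \<in> {1..N}"
  shows "x k t \<bullet> v - x l t \<bullet> v \<le> diameter N x t * norm v"
proof -
  have "x k t \<bullet> v - x l t \<bullet> v = (x k t - x l t) \<bullet> v" by (simp add: inner_diff_left)
  also have "\<dots> \<le> norm (x k t - x l t) * norm v" by (rule norm_cauchy_schwarz)
  also have "\<dots> \<le> diameter N x t * norm v" using diam_ge[OF assms, of x t] by (intro mult_right_mono) auto
  finally show ?thesis .
qed

lemma diam_from_proj:
  fixes x :: "nat \<Rightarrow> real \<Rightarrow> 'a::euclidean_space"
  assumes N: "N \<ge> 1" and B: "B \<ge> 0"
    and h: "\<And>v k l. k \<in> {1..N} \<Longrightarrow> l \<in> {1..N} \<Longrightarrow> x k t \<bullet> v - x l t \<bullet> v \<le> B * norm v"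
  shows "diameter N x t \<le> B"
proof -
  obtain i j where ij: "i \<in> {1..N}" "j \<in> {1..N}" "diameter N x t = norm (x i t - x j t)"
    using diam_attained[OF N] by blast
  define v where "v = x i t - x j t"
  show ?thesis
  proof (cases "v = 0")
    case True then show ?thesis using ij B unfolding v_def by simp
  next
    case False
    have "norm v * norm v = v \<bullet> v" by (simp add: dot_square_norm power2_eq_square)
    also have "\<dots> = x i t \<bullet> v - x j t \<bullet> v" unfolding v_def by (simp add: inner_diff_left)
    also have "\<dots> \<le> B * norm v" by (rule h[OF ij(1,2)])
    finally have "norm v * norm v \<le> B * norm v" .
    then have "norm v \<le> B" using False by simp
    then show ?thesis using ij unfolding v_def by simp
  qed
qed

lemma growth_diam:
  fixes x :: "nat \<Rightarrow> real \<Rightarrow> 'a::euclidean_space"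
  assumes rng: "rngM N M" and sysv: "\<And>v. sysR N M (\<lambda>k u. x k u \<bullet> v)" and N: "N \<ge> 2"
    and s: "0 \<le> s" "s \<le> s'"
  shows "diameter N x s \<le> exp (2 * ((real N - 1) / real N) * (s' - s)) * diameter N x s'"
proof -
  have N1: "N \<ge> 1" using N by simp
  obtain k l where kl: "k \<in> {1..N}" "l \<in> {1..N}" "diameter N x s = norm (x k s - x l s)"
    using diam_attained[OF N1] by blast
  define v where "v = x k s - x l s"
  define a where "a = 2 * ((real N - 1) / real N) * (s' - s)"
  have D's: "diameter N x s' \<ge> 0" by (rule diam_nonneg[OF N1])
  show ?thesis
  proof (cases "v = 0")
    case True then show ?thesis using kl D's unfolding v_def by simp
  next
    case False
    define p where "p = (\<lambda>k u. x k u \<bullet> v)"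
    let ?A = "\<lambda>u. (\<lambda>k. p k u) ` {1..N}"
    define Sp where "Sp = (\<lambda>u. Max (?A u) - Min (?A u))"
    have fin: "finite (?A u)" and ne: "?A u \<noteq> {}" for u using N by auto
    have g: "Sp s' \<ge> exp (- (2 * ((real N - 1) / real N)) * (s' - s)) * Sp s"
      unfolding Sp_def p_def by (rule spread_growth[OF rng sysv N s])
    have g2: "Sp s' \<ge> exp (- a) * Sp s" using g unfolding a_def by simp
    have "Sp s \<ge> p k s - p l s" unfolding Sp_def using fin kl by (simp add: Max_ge Min_le diff_mono)
    moreover have "p k s - p l s = norm v * norm v"
      unfolding p_def v_def by (simp add: inner_diff_left[symmetric] dot_square_norm power2_eq_square)
    ultimately have L: "diameter N x s * norm v \<le> Sp s" using kl unfolding v_def by simp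
    obtain i where i: "i \<in> {1..N}" "p i s' = Max (?A s')" using Max_in[OF fin ne, of s'] by auto
    obtain j where j: "j \<in> {1..N}" "p j s' = Min (?A s')" using Min_in[OF fin ne, of s'] by auto
    have R: "Sp s' \<le> diameter N x s' * norm v"
      unfolding Sp_def using i j proj_le_diam[OF i(1) j(1), of x s' v] unfolding p_def by simp
    have e: "exp a * exp (- a) = 1" by (simp flip: exp_add)
    have "exp a * (exp (- a) * Sp s) = (exp a * exp (- a)) * Sp s" by (simp only: mult.assoc)
    then have e2: "exp a * (exp (- a) * Sp s) = Sp s" using e by simp
    have "exp a * (exp (- a) * Sp s) \<le> exp a * Sp s'" using g2 by (intro mult_left_mono) auto
    then have "Sp s \<le> exp a * Sp s'" using e2 by linarith
    also have "\<dots> \<le> exp a * (diameter N x s' * norm v)" using R by (intro mult_left_mono) auto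
    finally have "diameter N x s * norm v \<le> (exp a * diameter N x s') * norm v" using L by (simp add: mult.assoc)
    then have "diameter N x s \<le> exp a * diameter N x s'" using False by simp
    then show ?thesis unfolding a_def .
  qed
qed

theorem theorem1:
  fixes N :: nat and M :: "nat \<Rightarrow> nat \<Rightarrow> real \<Rightarrow> real"
    and x :: "nat \<Rightarrow> real \<Rightarrow> 'a::euclidean_space"
    and T \<mu> :: real and E :: "(nat \<times> nat) set" and I :: nat
    and \<tau> C \<delta> :: real and \<phi> :: "real \<Rightarrow> real"
  assumes N2: "N \<ge> 2"
    and meas: "\<forall>i\<in>{1..N}. \<forall>j\<in>{1..N}. M i j \<in> borel_measurable (restrict_space lebesgue {0..})"
    and range: "\<forall>i\<in>{1..N}. \<forall>j\<in>{1..N}. \<forall>t\<ge>0. 0 \<le> M i j t \<and> M i j t \<le> 1"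
    and sol: "\<forall>i\<in>{1..N}. \<forall>t\<ge>0.
       ((\<lambda>s. (1 / real N) *\<^sub>R (\<Sum>j=1..N. M i j s *\<^sub>R (x j s - x i s))) has_integral (x i t - x i 0)) {0..t}"
    and T: "T > 0" and mu: "\<mu> > 0"
    and E: "E \<subseteq> {1..N} \<times> {1..N}"
    and Econn: "\<forall>k::nat. \<forall>(i, j)\<in>E. conn_arrow T \<mu> M (real k * T) i j"
    and reach: "globally_reachable N E I"
    and tau_def: "\<tau> = real (graph_length N E I) * T"
    and C_def: "C = 1 - (1/2) * (\<mu> * T / (real N + \<mu> * T)) ^ graph_length N E I
                       * exp (- 2 * real (graph_length N E I) * T)"
    and delta_def: "\<delta> = - (real N / (2 * (real N - 1))) * ln C"
    and phi_def: "\<phi> = (\<lambda>t. if t \<le> \<tau> - \<delta> then 1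
                      else C * exp (2 * ((real N - 1) / real N) * (\<tau> - t)))"
  shows "(\<forall>n::nat. diameter N x (real n * \<tau>) \<le> C ^ n * diameter N x 0)
    \<and> (\<forall>n::nat. \<forall>t. 0 \<le> t \<and> t \<le> \<tau> \<longrightarrow>
           diameter N x (real n * \<tau> + t) \<le> \<phi> t * C ^ n * diameter N x 0)"
proof -
  define d where "d = graph_length N E I"
  have rng: "rngM N M" unfolding rngM_def using range by blast
  have sysv: "\<And>v. sysR N M (\<lambda>k u. x k u \<bullet> v)" by (rule sys_from_sol[OF sol])
  have N1: "N \<ge> 1" using N2 by simp
  have tau: "\<tau> = real d * T" using tau_def d_def by simp
  have tau0: "\<tau> \<ge> 0" using tau T by simp
  have C0: "C \<ge> 0"
  proof -
    have mT: "\<mu> * T > 0" using mu T by simp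
    define q where "q = \<mu> * T / (real N + \<mu> * T)"
    have q0: "q \<ge> 0" "q \<le> 1" unfolding q_def using mT by (auto simp: divide_le_eq_1)
    have "q^d \<le> 1" using q0 by (simp add: power_le_one)
    moreover have "exp (-2 * real d * T) \<le> 1" using T by simp
    ultimately have "q^d * exp (-2 * real d * T) \<le> 1" using q0 by (simp add: mult_le_one)
    then show ?thesis unfolding C_def q_def d_def by simp
  qed
  have D0: "\<And>t. diameter N x t \<ge> 0" by (rule diam_nonneg[OF N1])
  have step: "diameter N x (real (Suc n) * \<tau>) \<le> C * diameter N x (real n * \<tau>)" for n
  proof (rule diam_from_proj[OF N1])
    show "C * diameter N x (real n * \<tau>) \<ge> 0" using C0 D0 by simp
    fix v k l assume k: "k \<in> {1..N}" and l: "l \<in> {1..N}"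
    have t0: "real n * \<tau> = real (n * d) * T" unfolding tau by simp
    have sp: "\<forall>k\<in>{1..N}. \<forall>l\<in>{1..N}. x k (real n * \<tau>) \<bullet> v - x l (real n * \<tau>) \<bullet> v \<le> diameter N x (real n * \<tau>) * norm v"
      using proj_le_diam by blast
    have "\<forall>k\<in>{1..N}. \<forall>l\<in>{1..N}. x k (real n * \<tau> + real d * T) \<bullet> v - x l (real n * \<tau> + real d * T) \<bullet> v \<le> C * (diameter N x (real n * \<tau>) * norm v)"
      by (rule spread_contract[where p="\<lambda>k u. x k u \<bullet> v", OF rng sysv T mu t0 E Econn reach d_def C_def[folded d_def] sp])
    moreover have "real n * \<tau> + real d * T = real (Suc n) * \<tau>" unfolding tau by (simp add: algebra_simps)
    ultimately show "x k (real (Suc n) * \<tau>) \<bullet> v - x l (real (Suc n) * \<tau>) \<bullet> v \<le> C * diameter N x (real n * \<tau>) * norm v"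
      using k l by (simp add: mult.assoc)
  qed
  have claim1: "diameter N x (real n * \<tau>) \<le> C ^ n * diameter N x 0" for n
  proof (induction n)
    case 0 then show ?case by simp
  next
    case (Suc n)
    have "diameter N x (real (Suc n) * \<tau>) \<le> C * diameter N x (real n * \<tau>)" by (rule step)
    also have "\<dots> \<le> C * (C ^ n * diameter N x 0)" using Suc C0 by (intro mult_left_mono) auto
    finally show ?case by (simp add: mult.assoc)
  qed
  have mono: "diameter N x t \<le> diameter N x s" if "0 \<le> s" "s \<le> t" for s t
  proof (rule diam_from_proj[OF N1 D0])
    fix v k l assume k: "k \<in> {1..N}" and l: "l \<in> {1..N}"
    have sp: "\<forall>k\<in>{1..N}. \<forall>l\<in>{1..N}. x k s \<bullet> v - x l s \<bullet> v \<le> diameter N x s * norm v"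
      using proj_le_diam by blast
    have "\<forall>k\<in>{1..N}. \<forall>l\<in>{1..N}. x k t \<bullet> v - x l t \<bullet> v \<le> diameter N x s * norm v"
      by (rule spread_mono[where p="\<lambda>k u. x k u \<bullet> v", OF rng sysv that N1 sp])
    then show "x k t \<bullet> v - x l t \<bullet> v \<le> diameter N x s * norm v" using k l by blast
  qed
  have claim2: "diameter N x (real n * \<tau> + t) \<le> \<phi> t * C ^ n * diameter N x 0"
    if t: "0 \<le> t" "t \<le> \<tau>" for n t
  proof (cases "t \<le> \<tau> - \<delta>")
    case True
    have "diameter N x (real n * \<tau> + t) \<le> diameter N x (real n * \<tau>)"
      by (rule mono) (use tau0 t in auto)
    also have "\<dots> \<le> C ^ n * diameter N x 0" by (rule claim1)
    finally show ?thesis using True unfolding phi_def by simp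
  next
    case False
    have e: "real (Suc n) * \<tau> - (real n * \<tau> + t) = \<tau> - t" by (simp add: algebra_simps)
    have "diameter N x (real n * \<tau> + t) \<le> exp (2 * ((real N - 1) / real N) * (real (Suc n) * \<tau> - (real n * \<tau> + t))) * diameter N x (real (Suc n) * \<tau>)"
      by (rule growth_diam[OF rng sysv N2]) (use tau0 t in \<open>auto simp: algebra_simps\<close>)
    also have "\<dots> \<le> exp (2 * ((real N - 1) / real N) * (\<tau> - t)) * (C ^ Suc n * diameter N x 0)"
      unfolding e using claim1[of "Suc n"] by (intro mult_left_mono) auto
    also have "\<dots> = \<phi> t * C ^ n * diameter N x 0" using False unfolding phi_def by (simp add: algebra_simps)
    finally show ?thesis .
  qed
  show ?thesis using claim1 claim2 by blast
qed

end
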